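(* There is $\delta_0>0$ such that for every $\delta\in(0,\delta_0]$, every $s\ge s_0$ and every $X\in\mathcal X(s)$, $$X\le \alpha_1X+\sum_{l=1}^Le^{(\alpha_1-\alpha_l)s}\Psi_{i_l}\big(e^{(\alpha_l-\alpha_1)s}(X-Y_l(s))\big).$$
   Context: For a positive integer $i$, $\Psi_i:\mathbb R\to\mathbb R$ denotes the odd, strictly decreasing, analytic solution of $-\frac{1}{2i}\Psi_i+\frac{2i+1}{2i}X\Psi_i'(X)+\Psi_i(X)\Psi_i'(X)=0$ satisfying $\Psi_i(X)=-X+X^{2i+1}+O(X^{4i+1})$ as $X\to0$. It satisfies $\Psi_i(X)=-\operatorname{sgn}(X)|X|^{\frac1{2i+1}}+O(|X|^{-1+\frac{2}{2i+1}})$ as $|X|\to\infty$, and $|\Psi_i(X)|\approx |X|(1+|X|)^{\frac1{2i+1}-1}$. Fix an integer $L\ge2$ and positive integers $i_1,\dots,i_L$; let $\alpha_l=1+\frac1{2i_l}$. Let $\delta\in(0,1)$ and $s_0=-\log\delta$. For $l=1,\dots,L$ put $y_{l,0}=3(l-1)\delta^{1/(2i_1)}$, $h_l=\sum_{l'=1}^L\delta^{\frac1{2i_{l'}}}\Big(\Psi_{i_{l'}}\big(\tfrac{y_{l,0}-y_{l',0}}{\delta^{\alpha_{l'}}}\big)-\Psi_{i_{l'}}\big(\tfrac{-y_{l',0}}{\delta^{\alpha_{l'}}}\big)\Big)$, and for $s\ge s_0$ let $Y_l(s)=e^{\alpha_1 s}\big(y_{l,0}+(\delta-e^{-s})h_l\big)$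 (so $Y_1\equiv0$). Let $\mathcal X(s)=\{X\in\mathbb R: e^s\le X\le 2\delta^{1/(2i_1)}e^{\alpha_1 s}\}$. *)

theory Defs
  imports "HOL-Analysis.Analysis" "HOL-Library.Landau_Symbols"
begin

definition real_analytic :: "(real \<Rightarrow> real) \<Rightarrow> bool" where
  "real_analytic f \<longleftrightarrow>
     (\<forall>x. \<exists>r>0. \<exists>a::nat \<Rightarrow> real. \<forall>y. \<bar>y - x\<bar> < r \<longrightarrow> (\<lambda>n. a n * (y - x) ^ n) sums f y)"

definition Psi :: "nat \<Rightarrow> real \<Rightarrow> real" where
  "Psi k = (THE f.
      (\<forall>x. f (-x) = - f x) \<and>
      (\<forall>x y. x < y \<longrightarrow> f y < f x) \<and>
      real_analytic f \<and>
      (\<forall>x. \<exists>d. (f has_real_derivative d) (at x) \<and>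
            -(1 / (2 * real k)) * f x + ((2 * real k + 1) / (2 * real k)) * x * d + f x * d = 0) \<and>
      (\<lambda>x. f x - (- x + x ^ (2 * k + 1))) \<in> O[at 0](\<lambda>x. x ^ (4 * k + 1)))"

definition alpha :: "nat \<Rightarrow> real" where
  "alpha k = 1 + 1 / (2 * real k)"

definition y0 :: "(nat \<Rightarrow> nat) \<Rightarrow> real \<Rightarrow> nat \<Rightarrow> real" where
  "y0 i \<delta> l = 3 * (real l - 1) * \<delta> powr (1 / (2 * real (i 1)))"

definition hcoef :: "nat \<Rightarrow> (nat \<Rightarrow> nat) \<Rightarrow> real \<Rightarrow> nat \<Rightarrow> real" where
  "hcoef L i \<delta> l = (\<Sum>l'=1..L. \<delta> powr (1 / (2 * real (i l'))) *
      (Psi (i l') ((y0 i \<delta> l - y0 i \<delta> l') / \<delta> powr alpha (i l'))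
       - Psi (i l') (- y0 i \<delta> l' / \<delta> powr alpha (i l'))))"

definition Ypos :: "nat \<Rightarrow> (nat \<Rightarrow> nat) \<Rightarrow> real \<Rightarrow> nat \<Rightarrow> real \<Rightarrow> real" where
  "Ypos L i \<delta> l s = exp (alpha (i 1) * s) * (y0 i \<delta> l + (\<delta> - exp (- s)) * hcoef L i \<delta> l)"

end

theory Submission
  imports Defs "HOL-Complex_Analysis.Complex_Analysis"
begin

definition Hf :: "nat \<Rightarrow> real \<Rightarrow> real" where
  "Hf k y = - y - y ^ (2 * k + 1)"

lemma oddpow_less: "(y::real) < z \<Longrightarrow> y ^ (2 * k + 1) < z ^ (2 * k + 1)"
proof -
  assume yz: "y < z"
  show ?thesis
  proof (cases "0 \<le> y")
    case True thus ?thesis using yz by (intro power_strict_mono) auto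
  next
    case False
    show ?thesis
    proof (cases "z \<le> 0")
      case True
      have "(-z) ^ (2*k+1) < (-y) ^ (2*k+1)" using yz True False by (intro power_strict_mono) auto
      thus ?thesis by (simp add: power_minus_odd)
    next
      case False2: False
      have "y ^ Suc (2*k) < 0" using False by (intro odd_power_less_zero) auto
      moreover have "0 \<le> z ^ (2*k+1)" using False2 by simp
      ultimately show ?thesis by simp
    qed
  qed
qed

lemma Hf_strict: "y < z \<Longrightarrow> Hf k z < Hf k y"
  unfolding Hf_def using oddpow_less[of y z k] by linarith

lemma Hf_inj: "Hf k y = Hf k z \<Longrightarrow> y = z"
  by (metis Hf_strict less_irrefl linorder_neqE_linordered_idom)

lemma Hf_cont: "isCont (Hf k) x"
  unfolding Hf_def by (intro continuous_intros)

lemma Hf_ex: "\<exists>y. Hf k y = x"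
proof -
  let ?a = "- (\<bar>x\<bar> + 1)" and ?b = "\<bar>x\<bar> + 1"
  have "?b ^ (2*k+1) \<ge> 0" by simp
  hence 1: "Hf k ?b \<le> x" unfolding Hf_def by linarith
  have "(- ?b) ^ (2*k+1) \<le> 0" 
    using odd_power_less_zero[of "- ?b" k] by (simp del: power_minus_odd) (smt (verit))
  hence 2: "x \<le> Hf k ?a" unfolding Hf_def by linarith
  from IVT2[of "Hf k" ?b x ?a] 1 2 Hf_cont show ?thesis by auto
qed

definition Pinv :: "nat \<Rightarrow> real \<Rightarrow> real" where
  "Pinv k x = (THE y. Hf k y = x)"

lemma Pinv: "Hf k (Pinv k x) = x"
  unfolding Pinv_def using Hf_ex[of k x] Hf_inj by (metis (mono_tags) theI)

lemma Pinv_eq: "- Pinv k x - Pinv k x ^ (2*k+1) = x"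
  using Pinv[of k x] unfolding Hf_def .

lemma Pinv_unique: "Hf k y = x \<Longrightarrow> Pinv k x = y"
  using Pinv Hf_inj by metis

lemma Pinv_Hf: "Pinv k (Hf k y) = y"
  by (simp add: Pinv_unique)

lemma Pinv_strict: "x < y \<Longrightarrow> Pinv k y < Pinv k x"
  by (metis Pinv Hf_strict less_irrefl linorder_neqE_linordered_idom order.asym)

lemma Pinv_odd: "Pinv k (- x) = - Pinv k x"
proof (rule Pinv_unique)
  show "Hf k (- Pinv k x) = - x" using Pinv[of k x] unfolding Hf_def
    by (simp add: power_minus_odd)
qed

lemma Pinv_0: "Pinv k 0 = 0"
  by (rule Pinv_unique) (simp add: Hf_def)

lemma Pinv_cont: "isCont (Pinv k) x"
proof -
  have "isCont (Pinv k) (Hf k (Pinv k x))"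
    by (rule isCont_inverse_function[where d=1]) (auto simp: Pinv_Hf Hf_cont)
  thus ?thesis by (simp add: Pinv)
qed

lemma abs_Pinv: "\<bar>x\<bar> = \<bar>Pinv k x\<bar> + \<bar>Pinv k x\<bar> ^ (2*k+1)"
proof -
  let ?p = "Pinv k x"
  have x: "x = - (?p + ?p ^ (2*k+1))" using Pinv_eq[of k x] by simp
  show ?thesis
  proof (cases "0 \<le> ?p")
    case True
    hence "?p ^ (2*k+1) \<ge> 0" by simp
    thus ?thesis using x True by (smt (verit))
  next
    case False
    hence "?p ^ (2*k+1) < 0" using zero_le_odd_power[of "2*k+1" ?p] by simp
    thus ?thesis using x False by (simp add: power_abs)
  qed
qed

lemma abs_Pinv_le: "\<bar>Pinv k x\<bar> \<le> \<bar>x\<bar>"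
  using abs_Pinv[of x k] by (simp add: add_increasing2)

lemma abs_Pinv_pow_le: "\<bar>Pinv k x\<bar> ^ (2*k+1) \<le> \<bar>x\<bar>"
  using abs_Pinv[of x k] by simp

lemma Hf_deriv: "(Hf k has_real_derivative (-1 - real (2*k+1) * y ^ (2*k))) (at y)"
  unfolding Hf_def by (rule derivative_eq_intros refl | simp)+

lemma Pinv_deriv: "(Pinv k has_real_derivative inverse (-1 - real (2*k+1) * Pinv k x ^ (2*k))) (at x)"
proof (rule DERIV_inverse_function[where f="Hf k" and a="x-1" and b="x+1"])
  show "(Hf k has_real_derivative (-1 - real (2*k+1) * Pinv k x ^ (2*k))) (at (Pinv k x))"
    by (rule Hf_deriv)
  have "0 \<le> real (2*k+1) * Pinv k x ^ (2*k)" by simp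
  thus "-1 - real (2*k+1) * Pinv k x ^ (2*k) \<noteq> 0" by linarith
qed (auto simp: Pinv Pinv_cont)

lemma ode_alg:
  assumes k: "k > 0" and D: "D = -1 - real (2*k+1) * y ^ (2*k)" and x: "x = - y - y ^ (2*k+1)"
  shows "-(1 / (2 * real k)) * y + ((2 * real k + 1) / (2 * real k)) * x * inverse D + y * inverse D = 0"
proof -
  have "0 \<le> real (2*k+1) * y ^ (2*k)" by simp
  hence Dne: "D \<noteq> 0" using D by linarith
  define z where "z = y^(2*k)"
  have x': "x = - y - y * z" using x by (simp add: z_def)
  have D': "D = -1 - real (2*k+1) * z" using D by (simp add: z_def)
  have "-(y * D) + (2 * real k + 1) * x + 2 * real k * y = 0"
    unfolding x' D' by (simp add: algebra_simps)
  moreover have "-(1 / (2 * real k)) * y + ((2 * real k + 1) / (2 * real k)) * x * inverse D + y * inverse D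
     = (-(y * D) + (2 * real k + 1) * x + 2 * real k * y) / (2 * real k * D)"
    using Dne k by (simp add: field_simps)
  ultimately show ?thesis by simp
qed

lemma Pinv_bigo_bound: "\<bar>Pinv k x - (- x + x ^ (2*k+1))\<bar> \<le> real (2*k+1) * \<bar>x\<bar> ^ (4*k+1)"
proof (cases "x = 0")
  case True thus ?thesis by (simp add: Pinv_0)
next
  case False
  let ?p = "Pinv k x" and ?n = "2*k+1"
  have ax: "\<bar>x\<bar> > 0" using False by simp
  have e: "Pinv k x - (- x + x ^ ?n) = - (x ^ ?n - (- ?p) ^ ?n)"
    using Pinv_eq[of k x] by (simp add: power_minus_odd)
  have xp: "x - (- ?p) = - (?p ^ ?n)" using Pinv_eq[of k x] by simp
  define z where "z = x / \<bar>x\<bar>"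
  define w where "w = - ?p / \<bar>x\<bar>"
  have nz: "norm z \<le> 1" using ax by (simp add: z_def)
  have nw: "norm w \<le> 1" using ax abs_Pinv_le[of k x] by (simp add: w_def divide_le_eq_1)
  have "norm (z ^ ?n - w ^ ?n) \<le> real ?n * norm (z - w)" by (rule norm_power_diff[OF nz nw])
  moreover have "z ^ ?n - w ^ ?n = (x ^ ?n - (- ?p) ^ ?n) / \<bar>x\<bar> ^ ?n"
    by (simp add: z_def w_def power_divide diff_divide_distrib add_divide_distrib)
  moreover have "z - w = (x - (- ?p)) / \<bar>x\<bar>"
    by (simp add: z_def w_def diff_divide_distrib) (metis add_divide_distrib)
  ultimately have "\<bar>x ^ ?n - (- ?p) ^ ?n\<bar> / \<bar>x\<bar> ^ ?n \<le> real ?n * (\<bar>?p\<bar> ^ ?n / \<bar>x\<bar>)"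
    using xp by (simp add: power_abs abs_mult)
  hence "\<bar>x ^ ?n - (- ?p) ^ ?n\<bar> \<le> real ?n * (\<bar>?p\<bar> ^ ?n / \<bar>x\<bar>) * \<bar>x\<bar> ^ ?n"
    using ax by (simp add: divide_le_eq)
  also have "\<dots> = real ?n * \<bar>?p\<bar> ^ ?n * \<bar>x\<bar> ^ (2*k)"
    using ax by (simp add: field_simps)
  also have "\<dots> \<le> real ?n * \<bar>x\<bar> ^ ?n * \<bar>x\<bar> ^ (2*k)"
    using abs_Pinv_le[of k x] by (intro mult_right_mono mult_left_mono power_mono) auto
  also have "\<dots> = real ?n * \<bar>x\<bar> ^ (4*k+1)"
    by (simp add: mult.assoc power_add[symmetric])
  finally show ?thesis using e by simp
qed

definition Hc :: "nat \<Rightarrow> complex \<Rightarrow> complex" where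
  "Hc k z = - z - z ^ (2 * k + 1)"

lemma Hc_of_real: "Hc k (of_real y) = of_real (Hf k y)"
  by (simp add: Hc_def Hf_def)

lemma Pinv_analytic: "real_analytic (Pinv k)"
  unfolding real_analytic_def
proof
  fix x0 :: real
  define p0 where "p0 = Pinv k x0"
  define \<xi> where "\<xi> = (of_real p0 :: complex)"
  have holH: "Hc k holomorphic_on UNIV" unfolding Hc_def by (intro holomorphic_intros)
  have dH: "(Hc k has_field_derivative (-1 - of_nat (2*k+1) * \<xi> ^ (2*k))) (at \<xi>)"
    unfolding Hc_def by (rule derivative_eq_intros refl | simp)+
  have "deriv (Hc k) \<xi> = -1 - of_nat (2*k+1) * \<xi> ^ (2*k)" using dH by (rule DERIV_imp_deriv)
  also have "\<dots> = of_real (-1 - real (2*k+1) * p0 ^ (2*k))" by (simp add: \<xi>_def)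
  also have "\<dots> \<noteq> 0"
  proof -
    have "0 \<le> real (2*k+1) * p0 ^ (2*k)" by simp
    hence "-1 - real (2*k+1) * p0 ^ (2*k) \<noteq> 0" by linarith
    thus ?thesis by (metis of_real_eq_0_iff)
  qed
  finally have dnz: "deriv (Hc k) \<xi> \<noteq> 0" .
  obtain r where r: "r > 0" "open (Hc k ` ball \<xi> r)" "inj_on (Hc k) (ball \<xi> r)"
    using has_complex_derivative_locally_invertible[OF holH _ _ dnz] by auto
  obtain G where G: "G holomorphic_on (Hc k ` ball \<xi> r)" "\<And>z. z \<in> ball \<xi> r \<Longrightarrow> G (Hc k z) = z"
    using holomorphic_has_inverse[OF holomorphic_on_subset[OF holH] open_ball r(3)] by blast
  have "of_real x0 \<in> Hc k ` ball \<xi> r"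
    using r(1) by (intro image_eqI[of _ _ \<xi>]) (auto simp: \<xi>_def Hc_of_real p0_def Pinv)
  then obtain \<rho> where \<rho>: "\<rho> > 0" "ball (of_real x0) \<rho> \<subseteq> Hc k ` ball \<xi> r"
    using r(2) openE by blast
  obtain \<epsilon> where \<epsilon>: "\<epsilon> > 0" "\<And>y. dist y x0 < \<epsilon> \<Longrightarrow> dist (Pinv k y) (Pinv k x0) < r"
    using Pinv_cont[where k=k and x=x0] r(1) unfolding continuous_at_eps_delta by blast
  define R where "R = min \<rho> \<epsilon>"
  define c where "c = (\<lambda>n. (deriv ^^ n) G (of_real x0) / fact n)"
  have holG: "G holomorphic_on ball (of_real x0) R"
  proof (rule holomorphic_on_subset[OF G(1)])
    have "ball (of_real x0) R \<subseteq> ball (of_real x0) \<rho>" by (intro subset_ball) (simp add: R_def)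
    thus "ball (of_real x0) R \<subseteq> Hc k ` ball \<xi> r" using \<rho>(2) by blast
  qed
  show "\<exists>r>0. \<exists>a. \<forall>y. \<bar>y - x0\<bar> < r \<longrightarrow> (\<lambda>n. a n * (y - x0) ^ n) sums Pinv k y"
  proof (intro exI conjI allI impI)
    show "R > 0" using \<rho> \<epsilon> by (simp add: R_def)
    fix y assume y: "\<bar>y - x0\<bar> < R"
    have yin: "(of_real y :: complex) \<in> ball (of_real x0) R"
      using y by (simp add: dist_norm norm_minus_commute flip: of_real_diff)
    have S: "(\<lambda>n. c n * (of_real y - of_real x0) ^ n) sums G (of_real y)"
      unfolding c_def by (rule holomorphic_power_series[OF holG yin])
    have "dist (Pinv k y) p0 < r" using y \<epsilon>(2)[of y] by (simp add: R_def dist_real_def p0_def)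
    hence pin: "(of_real (Pinv k y) :: complex) \<in> ball \<xi> r"
      by (simp add: \<xi>_def dist_norm norm_minus_commute flip: of_real_diff)
    have "G (of_real y) = G (Hc k (of_real (Pinv k y)))" by (simp add: Hc_of_real Pinv)
    also have "\<dots> = of_real (Pinv k y)" using G(2)[OF pin] .
    finally have Gy: "G (of_real y) = of_real (Pinv k y)" .
    have "(\<lambda>n. Re (c n * (of_real y - of_real x0) ^ n)) sums Re (G (of_real y))"
      using sums_Re[OF S] .
    moreover have "\<And>n. Re (c n * (of_real y - of_real x0) ^ n) = Re (c n) * (y - x0) ^ n"
      by (simp flip: of_real_diff of_real_power)
    ultimately show "(\<lambda>n. Re (c n) * (y - x0) ^ n) sums Pinv k y" using Gy by simp
  qed
qed

lemma cond_unique: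
  fixes f :: "real \<Rightarrow> real"
  assumes k: "k > 0"
    and odd: "\<forall>x. f (-x) = - f x"
    and dec: "\<forall>x y. x < y \<longrightarrow> f y < f x"
    and ode: "\<forall>x. \<exists>d. (f has_real_derivative d) (at x) \<and>
            -(1 / (2 * real k)) * f x + ((2 * real k + 1) / (2 * real k)) * x * d + f x * d = 0"
    and bo: "(\<lambda>x. f x - (- x + x ^ (2 * k + 1))) \<in> O[at 0](\<lambda>x. x ^ (4 * k + 1))"
  shows "f = Pinv k"
proof -
  define n where "n = 2 * k + 1"
  have f0: "f 0 = 0" using odd[rule_format, of 0] by simp
  have fneg: "f x < 0" if "x > 0" for x using dec[rule_format, of 0 x] that f0 by simp
  define g where "g = (\<lambda>x. (x + f x) / f x ^ n)"
  have "\<exists>C. \<forall>x\<in>{0<..}. g x = C"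
  proof (rule has_field_derivative_zero_constant)
    fix x :: real assume "x \<in> {0<..}"
    hence x: "x > 0" by simp
    obtain d where d: "(f has_real_derivative d) (at x)"
      and e: "-(1 / (2 * real k)) * f x + ((2 * real k + 1) / (2 * real k)) * x * d + f x * d = 0"
      using ode by blast
    have fx: "f x \<noteq> 0" using fneg[OF x] by simp
    have "(g has_real_derivative ((1 + d) * f x ^ n - (x + f x) * (of_nat n * (d * f x ^ (n - Suc 0))))
            / (f x ^ n * f x ^ n)) (at x)"
      unfolding g_def using fx
      by (intro DERIV_divide DERIV_power DERIV_add DERIV_ident d) auto
    moreover have "(1 + d) * f x ^ n - (x + f x) * (of_nat n * (d * f x ^ (n - Suc 0))) = 0"
    proof -
      define F where "F = f x"
      have "2 * real k * (-(1 / (2 * real k)) * F + ((2 * real k + 1) / (2 * real k)) * x * d + F * d)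
          = - F + (2 * real k + 1) * x * d + 2 * real k * F * d"
        using k by (simp add: field_simps)
      hence e2: "- F + (2 * real k + 1) * x * d + 2 * real k * F * d = 0"
        using e unfolding F_def by simp
      have "(1 + d) * F ^ n - (x + F) * (of_nat n * (d * F ^ (n - Suc 0)))
          = F ^ (2*k) * ((1 + d) * F - (2 * real k + 1) * (x + F) * d)"
        by (simp add: n_def algebra_simps)
      also have "(1 + d) * F - (2 * real k + 1) * (x + F) * d = 0" using e2 by (simp add: algebra_simps)
      finally show ?thesis by (simp add: F_def)
    qed
    ultimately show "(g has_real_derivative 0) (at x within {0<..})"
      by (simp add: has_field_derivative_at_within)
  qed simp
  then obtain C where C: "\<And>x. x > 0 \<Longrightarrow> g x = C" by auto
  have CF: "x + f x = C * f x ^ n" if "x > 0" for x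
    using C[OF that] fneg[OF that] unfolding g_def by (simp add: field_simps)
  obtain c where c: "c > 0" "eventually (\<lambda>x. norm (f x - (- x + x ^ (2 * k + 1))) \<le> c * norm (x ^ (4 * k + 1))) (at 0)"
    using landau_o.bigE[OF bo] by blast
  have ev: "eventually (\<lambda>x. x > 0 \<and> \<bar>f x - (- x + x ^ n)\<bar> \<le> c * x ^ (4 * k + 1)) (at_right 0)"
  proof -
    have "eventually (\<lambda>x. norm (f x - (- x + x ^ (2 * k + 1))) \<le> c * norm (x ^ (4 * k + 1))) (at_right 0)"
      using c(2) by (rule filter_leD[OF at_le, rotated]) simp
    moreover have "eventually (\<lambda>x::real. x > 0) (at_right 0)" by (simp add: eventually_at_right_less)
    ultimately show ?thesis by eventually_elim (simp add: n_def)
  qed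
  have t0: "((\<lambda>x::real. x ^ m) \<longlongrightarrow> 0) (at_right 0)" if "m > 0" for m
  proof -
    have "((\<lambda>x::real. x ^ m) \<longlongrightarrow> 0 ^ m) (at_right 0)" by (intro tendsto_intros)
    thus ?thesis using that by simp
  qed
  have L1: "((\<lambda>x. (x + f x) / x ^ n) \<longlongrightarrow> 1) (at_right 0)"
  proof -
    have "((\<lambda>x. (x + f x) / x ^ n - 1) \<longlongrightarrow> 0) (at_right 0)"
    proof (rule Lim_null_comparison)
      show "eventually (\<lambda>x. norm ((x + f x) / x ^ n - 1) \<le> c * x ^ (2*k)) (at_right 0)"
        using ev
      proof eventually_elim
        case (elim x)
        hence x: "x > 0" and b: "\<bar>f x - (- x + x ^ n)\<bar> \<le> c * x ^ (4 * k + 1)" by auto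
        have "(x + f x) / x ^ n - 1 = (f x - (- x + x ^ n)) / x ^ n" using x by (simp add: field_simps)
        hence "norm ((x + f x) / x ^ n - 1) = \<bar>f x - (- x + x ^ n)\<bar> / x ^ n" using x by simp
        also have "\<dots> \<le> c * x ^ (4 * k + 1) / x ^ n" using b x by (intro divide_right_mono) auto
        also have "\<dots> = c * x ^ (2*k)" using x by (simp add: n_def field_simps power_add[symmetric])
        finally show ?case .
      qed
      show "((\<lambda>x. c * x ^ (2*k)) \<longlongrightarrow> 0) (at_right 0)"
        using tendsto_mult_right_zero[OF t0[of "2*k"]] k by simp
    qed
    thus ?thesis using LIM_zero_iff by blast
  qed
  have L2: "((\<lambda>x. f x / x) \<longlongrightarrow> -1) (at_right 0)"
  proof -
    have "((\<lambda>x. f x / x + 1) \<longlongrightarrow> 0) (at_right 0)"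
    proof (rule Lim_null_comparison)
      show "eventually (\<lambda>x. norm (f x / x + 1) \<le> c * x ^ (4*k) + x ^ (2*k)) (at_right 0)"
        using ev
      proof eventually_elim
        case (elim x)
        hence x: "x > 0" and b: "\<bar>f x - (- x + x ^ n)\<bar> \<le> c * x ^ (4 * k + 1)" by auto
        have "f x / x + 1 = (f x - (- x + x ^ n)) / x + x ^ (2*k)" using x by (simp add: field_simps n_def)
        hence "norm (f x / x + 1) \<le> \<bar>f x - (- x + x ^ n)\<bar> / x + x ^ (2*k)" using x
          by (simp add: abs_triangle_ineq[THEN order_trans])
        also have "\<dots> \<le> c * x ^ (4 * k + 1) / x + x ^ (2*k)" using b x by (intro add_right_mono divide_right_mono) auto
        also have "\<dots> = c * x ^ (4*k) + x ^ (2*k)" using x by (simp add: field_simps)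
        finally show ?case .
      qed
      have "((\<lambda>x. c * x ^ (4*k) + x ^ (2*k)) \<longlongrightarrow> c * 0 + 0) (at_right 0)"
        using k by (intro tendsto_intros t0) auto
      thus "((\<lambda>x. c * x ^ (4*k) + x ^ (2*k)) \<longlongrightarrow> 0) (at_right 0)" by simp
    qed
    hence "((\<lambda>x. (f x / x + 1) - 1) \<longlongrightarrow> 0 - 1) (at_right 0)" by (intro tendsto_intros)
    thus ?thesis by simp
  qed
  have "((\<lambda>x. C * (f x / x) ^ n) \<longlongrightarrow> C * (-1) ^ n) (at_right 0)"
    by (intro tendsto_intros L2)
  moreover have "eventually (\<lambda>x. C * (f x / x) ^ n = (x + f x) / x ^ n) (at_right 0)"
    using ev by eventually_elim (simp add: CF power_divide)
  ultimately have "((\<lambda>x. (x + f x) / x ^ n) \<longlongrightarrow> C * (-1) ^ n) (at_right 0)"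
    by (rule Lim_transform_eventually)
  hence "C * (-1) ^ n = 1" using L1 by (rule tendsto_unique[rotated 1]) simp
  hence Cv: "C = -1" by (simp add: n_def)
  have pos: "f x = Pinv k x" if "x > 0" for x
  proof (rule sym, rule Pinv_unique)
    show "Hf k (f x) = x" using CF[OF that] Cv by (simp add: Hf_def n_def)
  qed
  show ?thesis
  proof
    fix x :: real
    consider "x > 0" | "x = 0" | "x < 0" by linarith
    thus "f x = Pinv k x"
    proof cases
      case 1 thus ?thesis by (rule pos)
    next
      case 2 thus ?thesis by (simp add: f0 Pinv_0)
    next
      case 3
      have "f x = - f (- x)" using odd[rule_format, of "-x"] by simp
      also have "\<dots> = - Pinv k (- x)" using pos[of "-x"] 3 by simp
      finally show ?thesis by (simp add: Pinv_odd)
    qed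
  qed
qed

lemma Psi_eq: assumes k: "k > 0" shows "Psi k = Pinv k"
  unfolding Psi_def
proof (rule the_equality)
  show "(\<forall>x. Pinv k (-x) = - Pinv k x) \<and>
      (\<forall>x y. x < y \<longrightarrow> Pinv k y < Pinv k x) \<and>
      real_analytic (Pinv k) \<and>
      (\<forall>x. \<exists>d. (Pinv k has_real_derivative d) (at x) \<and>
            -(1 / (2 * real k)) * Pinv k x + ((2 * real k + 1) / (2 * real k)) * x * d + Pinv k x * d = 0) \<and>
      (\<lambda>x. Pinv k x - (- x + x ^ (2 * k + 1))) \<in> O[at 0](\<lambda>x. x ^ (4 * k + 1))"
  proof (intro conjI allI impI)
    show "Pinv k (-x) = - Pinv k x" for x by (rule Pinv_odd)
    show "x < y \<Longrightarrow> Pinv k y < Pinv k x" for x y by (rule Pinv_strict)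
    show "real_analytic (Pinv k)" by (rule Pinv_analytic)
    fix x
    show "\<exists>d. (Pinv k has_real_derivative d) (at x) \<and>
            -(1 / (2 * real k)) * Pinv k x + ((2 * real k + 1) / (2 * real k)) * x * d + Pinv k x * d = 0"
      using Pinv_deriv[of k x] ode_alg[OF k refl, where y="Pinv k x" and x=x] Pinv_eq[of k x] by auto
  next
    show "(\<lambda>x. Pinv k x - (- x + x ^ (2 * k + 1))) \<in> O[at 0](\<lambda>x. x ^ (4 * k + 1))"
    proof (rule bigoI[where c="real (2*k+1)"], rule always_eventually, rule allI)
      fix x :: real
      show "norm (Pinv k x - (- x + x ^ (2 * k + 1))) \<le> real (2*k+1) * norm (x ^ (4 * k + 1))"
        using Pinv_bigo_bound[of k x] by (simp only: real_norm_def power_abs)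
    qed
  qed
next
  fix f assume "(\<forall>x. f (-x) = - f x) \<and>
      (\<forall>x y. x < y \<longrightarrow> f y < f x) \<and>
      real_analytic f \<and>
      (\<forall>x. \<exists>d. (f has_real_derivative d) (at x) \<and>
            -(1 / (2 * real k)) * f x + ((2 * real k + 1) / (2 * real k)) * x * d + f x * d = 0) \<and>
      (\<lambda>x. f x - (- x + x ^ (2 * k + 1))) \<in> O[at 0](\<lambda>x. x ^ (4 * k + 1))"
  thus "f = Pinv k" using cond_unique[OF k, of f] by blast
qed

lemma Pinv_nonneg: "x \<le> 0 \<Longrightarrow> 0 \<le> Pinv k x"
  using Pinv_strict[of x 0 k] Pinv_0[of k] by (cases "x = 0") auto

lemma Pinv_lower:
  assumes k: "k > 0" and x: "x \<ge> 4 * real k"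
  shows "Pinv k x \<ge> - x / (2 * real k)"
proof -
  define q where "q = - Pinv k x"
  have q0: "q \<ge> 0" using Pinv_nonneg[of "-x" k] Pinv_odd[of k x] x by (simp add: q_def)
  have xq: "x = q + q * q ^ (2*k)" using Pinv_eq[of k x] by (simp add: q_def power_minus_odd)
  have "2 * real k * q \<le> x"
  proof (cases "q ^ (2*k) \<ge> 2 * real k")
    case True
    hence "q * (2 * real k) \<le> q * q ^ (2*k)" using q0 by (intro mult_left_mono) auto
    thus ?thesis using xq q0 by (simp add: mult.commute)
  next
    case False
    have "q < 2"
    proof (rule ccontr)
      assume "\<not> q < 2"
      hence "(2::real) ^ (2*k) \<le> q ^ (2*k)" by (intro power_mono) auto
      moreover have "real (2*k) < 2 ^ (2*k)"
        using less_exp[of "2*k"] by (metis of_nat_less_iff of_nat_numeral of_nat_power)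
      ultimately show False using False by simp
    qed
    hence "2 * real k * q \<le> 2 * real k * 2" using k by (intro mult_left_mono) auto
    thus ?thesis using x by linarith
  qed
  thus ?thesis using k by (simp add: q_def field_simps)
qed

lemma powr_pow_alpha:
  assumes "k > 0" "(d::real) > 0"
  shows "(d powr (1 / (2 * real k))) ^ (2*k+1) = d powr alpha k"
proof -
  have "(d powr (1 / (2 * real k))) ^ (2*k+1) = (d powr (1 / (2 * real k))) powr real (2*k+1)"
    using assms by (subst powr_realpow) auto
  also have "\<dots> = d powr (1 / (2 * real k) * real (2*k+1))" by (simp add: powr_powr)
  also have "1 / (2 * real k) * real (2*k+1) = alpha k" using assms by (simp add: alpha_def field_simps)
  finally show ?thesis .
qed

lemma bound_term:
  assumes k: "k > 0" and d: "(d::real) > 0" and a: "\<bar>a\<bar> * d powr alpha k \<le> M" and M: "1 \<le> M"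
  shows "\<bar>d powr (1 / (2 * real k)) * Pinv k a\<bar> \<le> M"
proof -
  define t where "t = \<bar>d powr (1 / (2 * real k)) * Pinv k a\<bar>"
  have "t ^ (2*k+1) = (d powr (1 / (2 * real k))) ^ (2*k+1) * \<bar>Pinv k a\<bar> ^ (2*k+1)"
    by (simp add: t_def abs_mult power_mult_distrib)
  also have "\<dots> = d powr alpha k * \<bar>Pinv k a\<bar> ^ (2*k+1)" using powr_pow_alpha[OF k d] by simp
  also have "\<dots> \<le> d powr alpha k * \<bar>a\<bar>" by (intro mult_left_mono abs_Pinv_pow_le) auto
  finally have tM: "t ^ (2*k+1) \<le> M" using a by (simp add: mult.commute)
  show ?thesis
  proof (cases "t \<le> 1")
    case True thus ?thesis using M by (simp add: t_def)
  next
    case False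
    hence "t \<le> t ^ (2*k+1)" by (intro self_le_power) auto
    thus ?thesis using tM by (simp add: t_def)
  qed
qed

lemma hcoef_bound:
  assumes pos: "\<forall>l\<in>{1..L}. i l > 0" and d: "\<delta> > 0"
    and D1: "\<delta> powr (1 / (2 * real (i 1))) \<le> 1" and l: "l \<in> {1..L}"
  shows "\<bar>hcoef L i \<delta> l\<bar> \<le> real L * (6 * real L)"
proof -
  define D where "D = \<delta> powr (1 / (2 * real (i 1)))"
  have D0: "D \<ge> 0" by (simp add: D_def)
  have D1': "D \<le> 1" using D1 by (simp add: D_def)
  have tb: "\<bar>\<delta> powr (1 / (2 * real (i l'))) *
      (Psi (i l') ((y0 i \<delta> l - y0 i \<delta> l') / \<delta> powr alpha (i l'))
       - Psi (i l') (- y0 i \<delta> l' / \<delta> powr alpha (i l')))\<bar> \<le> 6 * real L"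
    if l': "l' \<in> {1..L}" for l'
  proof -
    define k where "k = i l'"
    have k: "k > 0" using pos l' by (simp add: k_def)
    have pa: "\<delta> powr alpha k > 0" using d by simp
    have M: "1 \<le> 3 * real L" using l by auto
    have ya: "\<bar>y0 i \<delta> l - y0 i \<delta> l'\<bar> \<le> 3 * real L"
    proof -
      have "\<bar>y0 i \<delta> l - y0 i \<delta> l'\<bar> = 3 * \<bar>real l - real l'\<bar> * D"
      proof -
        have "y0 i \<delta> l - y0 i \<delta> l' = 3 * (real l - real l') * D"
          by (simp add: y0_def D_def algebra_simps)
        thus ?thesis using D0 by (simp only: abs_mult)
      qed
      also have "\<dots> \<le> 3 * real L * 1"
        using l l' D0 D1' by (intro mult_mono) auto
      finally show ?thesis by simp
    qed
    have yb: "\<bar>- y0 i \<delta> l'\<bar> \<le> 3 * real L"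
    proof -
      have "\<bar>- y0 i \<delta> l'\<bar> = 3 * (real l' - 1) * D"
        using l' D0 by (simp add: y0_def D_def)
      also have "\<dots> \<le> 3 * real L * 1"
        using l l' D0 D1' by (intro mult_mono) auto
      finally show ?thesis by simp
    qed
    have A: "\<bar>\<delta> powr (1 / (2 * real k)) * Pinv k ((y0 i \<delta> l - y0 i \<delta> l') / \<delta> powr alpha k)\<bar> \<le> 3 * real L"
      using pa ya by (intro bound_term[OF k d _ M]) (simp add: abs_divide)
    have B: "\<bar>\<delta> powr (1 / (2 * real k)) * Pinv k (- y0 i \<delta> l' / \<delta> powr alpha k)\<bar> \<le> 3 * real L"
      using pa yb by (intro bound_term[OF k d _ M]) (simp add: abs_divide del: abs_minus_cancel)
    have "\<bar>\<delta> powr (1 / (2 * real k)) * (Pinv k ((y0 i \<delta> l - y0 i \<delta> l') / \<delta> powr alpha k)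
       - Pinv k (- y0 i \<delta> l' / \<delta> powr alpha k))\<bar> \<le> 3 * real L + 3 * real L"
      using A B by (simp add: right_diff_distrib abs_triangle_ineq4[THEN order_trans])
    thus ?thesis using Psi_eq[OF k] by (simp add: k_def)
  qed
  have "\<bar>hcoef L i \<delta> l\<bar> \<le> (\<Sum>l'=1..L. \<bar>\<delta> powr (1 / (2 * real (i l'))) *
      (Psi (i l') ((y0 i \<delta> l - y0 i \<delta> l') / \<delta> powr alpha (i l'))
       - Psi (i l') (- y0 i \<delta> l' / \<delta> powr alpha (i l')))\<bar>)"
    unfolding hcoef_def by (rule sum_abs)
  also have "\<dots> \<le> real (card {1..L}) * (6 * real L)"
    by (rule sum_bounded_above) (rule tb)
  finally show ?thesis by simp
qed

theorem lemma4p5: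
  fixes L :: nat and i :: "nat \<Rightarrow> nat"
  assumes "L \<ge> 2" and "\<forall>l\<in>{1..L}. i l > 0"
  shows "\<exists>\<delta>0>0. \<forall>\<delta> s X. 0 < \<delta> \<and> \<delta> \<le> \<delta>0 \<and> \<delta> < 1 \<and> s \<ge> - ln \<delta> \<and>
            exp s \<le> X \<and> X \<le> 2 * \<delta> powr (1 / (2 * real (i 1))) * exp (alpha (i 1) * s) \<longrightarrow>
            X \<le> alpha (i 1) * X + (\<Sum>l=1..L. exp ((alpha (i 1) - alpha (i l)) * s) *
                   Psi (i l) (exp ((alpha (i l) - alpha (i 1)) * s) * (X - Ypos L i \<delta> l s)))"
proof -
  note L = assms(1) and pos = assms(2)
  define k where "k = i 1"
  have k: "k > 0" using pos L by (simp add: k_def)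
  define c :: real where "c = 1 / (24 * real L ^ 2 * real k)"
  have Lr: "real L \<ge> 2" using L by simp
  have c0: "c > 0" using k L by (simp add: c_def)
  have "24 * real L ^ 2 * real k \<ge> 1"
  proof -
    have "real L ^ 2 \<ge> 1" using Lr by (simp add: one_le_power)
    moreover have "real k \<ge> 1" using k by simp
    ultimately have "real L ^ 2 * real k \<ge> 1" using one_le_mult_iff by (metis mult_mono' order.trans zero_le_one mult_1_right less_le_not_le)
    thus ?thesis by linarith
  qed
  hence c1: "c \<le> 1" unfolding c_def using k L by (simp add: divide_le_eq_1)
  have c6: "c * (6 * real L ^ 2) \<le> 1 / 4"
    using k L by (simp add: c_def field_simps)
  have c4: "1 / c \<ge> 4 * real k"
  proof -
    have "real L ^ 2 \<ge> 1" using Lr by (simp add: one_le_power)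
    hence "24 * real L ^ 2 * real k \<ge> 4 * real k" using k by simp
    thus ?thesis by (simp add: c_def)
  qed
  define \<delta>0 where "\<delta>0 = c ^ (2 * k)"
  show ?thesis
  proof (rule exI[of _ \<delta>0], intro conjI allI impI)
    show "\<delta>0 > 0" using c0 by (simp add: \<delta>0_def)
    fix \<delta> s X
    assume H: "0 < \<delta> \<and> \<delta> \<le> \<delta>0 \<and> \<delta> < 1 \<and> s \<ge> - ln \<delta> \<and>
            exp s \<le> X \<and> X \<le> 2 * \<delta> powr (1 / (2 * real (i 1))) * exp (alpha (i 1) * s)"
    hence d0: "\<delta> > 0" and dd0: "\<delta> \<le> \<delta>0" and d1: "\<delta> < 1" and sd: "s \<ge> - ln \<delta>"
      and Xs: "exp s \<le> X" and XD: "X \<le> 2 * \<delta> powr (1 / (2 * real k)) * exp (alpha k * s)"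
      by (auto simp: k_def)
    define p where "p = 1 / (2 * real k)"
    define D where "D = \<delta> powr p"
    define E where "E = exp (alpha k * s)"
    have D0: "D > 0" using d0 by (simp add: D_def)
    have "D \<le> \<delta>0 powr p" unfolding D_def using dd0 d0 by (intro powr_mono2) (auto simp: p_def)
    also have "\<delta>0 powr p = c"
    proof -
      have "\<delta>0 powr p = (c powr real (2 * k)) powr p" using c0 unfolding \<delta>0_def by (subst powr_realpow) auto
      also have "\<dots> = c powr (real (2 * k) * p)" by (simp add: powr_powr)
      also have "real (2 * k) * p = 1" using k by (simp add: p_def)
      finally show ?thesis using c0 by simp
    qed
    finally have Dc: "D \<le> c" .
    have D1: "D \<le> 1" using Dc c1 by simp
    have dD: "\<delta> = D ^ (2 * k)"
    proof -
      have "D ^ (2 * k) = D powr real (2 * k)" using D0 by (subst powr_realpow) auto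
      also have "\<dots> = \<delta> powr (p * real (2 * k))" by (simp add: D_def powr_powr)
      also have "p * real (2 * k) = 1" using k by (simp add: p_def)
      finally show ?thesis using d0 by simp
    qed
    have dD2: "\<delta> \<le> D ^ 2" unfolding dD using D0 D1 k by (intro power_decreasing) auto
    have dc: "\<delta> \<le> c"
    proof -
      have "D ^ 2 \<le> D" using D0 D1 by (simp add: power2_eq_square mult_le_cancel_right1)
      thus ?thesis using dD2 Dc by linarith
    qed
    have es: "exp (- s) \<le> \<delta>"
    proof -
      have "exp (- s) \<le> exp (ln \<delta>)" using sd by simp
      thus ?thesis using d0 by simp
    qed
    have es0: "exp (- s) > 0" by simp
    have X4: "X \<ge> 4 * real k"
    proof -
      have "exp (- ln \<delta>) \<le> exp s" using sd by simp
      hence "1 / \<delta> \<le> exp s" using d0 by (simp add: exp_minus inverse_eq_divide)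
      moreover have "1 / c \<le> 1 / \<delta>" using dc d0 by (intro divide_left_mono) auto
      ultimately show ?thesis using c4 Xs by linarith
    qed
    have hb: "\<bar>hcoef L i \<delta> l\<bar> \<le> 6 * real L ^ 2" if "l \<in> {1..L}" for l
      using hcoef_bound[OF pos d0 _ that] D1 by (simp add: D_def p_def k_def power2_eq_square)
    have Y1: "Ypos L i \<delta> 1 s = 0"
      by (simp add: Ypos_def hcoef_def y0_def)
    have T1: "exp ((alpha (i 1) - alpha (i 1)) * s) *
               Psi (i 1) (exp ((alpha (i 1) - alpha (i 1)) * s) * (X - Ypos L i \<delta> 1 s)) \<ge> - X / (2 * real k)"
      unfolding Y1 using Pinv_lower[OF k X4] Psi_eq[OF k] by (simp add: k_def)
    have T2: "exp ((alpha (i 1) - alpha (i l)) * s) *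
               Psi (i l) (exp ((alpha (i l) - alpha (i 1)) * s) * (X - Ypos L i \<delta> l s)) \<ge> 0"
      if l: "l \<in> {2..L}" for l
    proof -
      have l1: "l \<in> {1..L}" using l by auto
      have kl: "i l > 0" using pos l1 by auto
      have yl: "y0 i \<delta> l \<ge> 3 * D"
      proof -
        have "3 * 1 * D \<le> 3 * (real l - 1) * D" using l D0 by (intro mult_right_mono) auto
        thus ?thesis by (simp add: y0_def D_def p_def k_def)
      qed
      have "(\<delta> - exp (- s)) * \<bar>hcoef L i \<delta> l\<bar> \<le> \<delta> * (6 * real L ^ 2)"
        using es es0 d0 hb[OF l1] by (intro mult_mono) auto
      also have "\<dots> \<le> D ^ 2 * (6 * real L ^ 2)" using dD2 by (intro mult_right_mono) auto
      also have "\<dots> = D * (D * (6 * real L ^ 2))" by (simp add: power2_eq_square)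
      also have "\<dots> \<le> D * (c * (6 * real L ^ 2))" using Dc D0 by (intro mult_left_mono mult_right_mono) auto
      also have "\<dots> \<le> D * (1/4)" using c6 D0 by (intro mult_left_mono) auto
      finally have hh: "(\<delta> - exp (- s)) * \<bar>hcoef L i \<delta> l\<bar> \<le> D / 4" by simp
      have "- ((\<delta> - exp (- s)) * \<bar>hcoef L i \<delta> l\<bar>) \<le> (\<delta> - exp (- s)) * hcoef L i \<delta> l"
      proof -
        have "- \<bar>hcoef L i \<delta> l\<bar> \<le> hcoef L i \<delta> l" by linarith
        hence "(\<delta> - exp (- s)) * (- \<bar>hcoef L i \<delta> l\<bar>) \<le> (\<delta> - exp (- s)) * hcoef L i \<delta> l"
          using es by (intro mult_left_mono) auto
        thus ?thesis by simp
      qed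
      hence inner: "y0 i \<delta> l + (\<delta> - exp (- s)) * hcoef L i \<delta> l \<ge> 2 * D"
        using yl hh D0 by linarith
      have "X \<le> 2 * D * E" using XD by (simp add: D_def p_def E_def)
      also have "\<dots> \<le> E * (y0 i \<delta> l + (\<delta> - exp (- s)) * hcoef L i \<delta> l)"
        using inner by (simp add: E_def mult.commute)
      finally have "X - Ypos L i \<delta> l s \<le> 0" by (simp add: Ypos_def E_def k_def)
      hence "exp ((alpha (i l) - alpha (i 1)) * s) * (X - Ypos L i \<delta> l s) \<le> 0"
        by (simp add: mult_nonneg_nonpos)
      hence "Psi (i l) (exp ((alpha (i l) - alpha (i 1)) * s) * (X - Ypos L i \<delta> l s)) \<ge> 0"
        using Pinv_nonneg Psi_eq[OF kl] by simp
      thus ?thesis by simp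
    qed
    have "(\<Sum>l=1..L. exp ((alpha (i 1) - alpha (i l)) * s) *
                   Psi (i l) (exp ((alpha (i l) - alpha (i 1)) * s) * (X - Ypos L i \<delta> l s)))
        = exp ((alpha (i 1) - alpha (i 1)) * s) *
               Psi (i 1) (exp ((alpha (i 1) - alpha (i 1)) * s) * (X - Ypos L i \<delta> 1 s))
          + (\<Sum>l=2..L. exp ((alpha (i 1) - alpha (i l)) * s) *
                   Psi (i l) (exp ((alpha (i l) - alpha (i 1)) * s) * (X - Ypos L i \<delta> l s)))"
      using L by (subst sum.atLeast_Suc_atMost) (auto simp: numeral_2_eq_2)
    moreover have "(\<Sum>l=2..L. exp ((alpha (i 1) - alpha (i l)) * s) *
                   Psi (i l) (exp ((alpha (i l) - alpha (i 1)) * s) * (X - Ypos L i \<delta> l s))) \<ge> 0"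
      by (rule sum_nonneg) (rule T2)
    moreover have "alpha (i 1) * X = X + X / (2 * real k)" by (simp add: alpha_def k_def algebra_simps)
    ultimately show "X \<le> alpha (i 1) * X + (\<Sum>l=1..L. exp ((alpha (i 1) - alpha (i l)) * s) *
                   Psi (i l) (exp ((alpha (i l) - alpha (i 1)) * s) * (X - Ypos L i \<delta> l s)))"
      using T1 by linarith
  qed
qed

end
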